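(* Let $S^{(1)},\dots,S^{(n)}$ be arbitrary labeled samples, each of size $m$, $S^{(i)}=\{(x^{(i)}_j,y^{(i)}_j)\}_{j\in[m]}\subseteq\{\pm1\}^d\times\{\pm1\}$, let $\mathcal{H}$ be a class of functions $\{\pm1\}^d\to\{\pm1\}$, and let $t\in\mathbb{N}$. Let $h^{(1)},\dots,h^{(n)}$ be the output of $\textsc{Boost}(S^{(1)},\dots,S^{(n)},\mathcal{H},t)$. For each iteration $s\in[t]$, let $\Gamma_s\in[0,1]$ be the value satisfying $$\sum_{i\in[n]}W^{(i)}\Big(\sum_{j\in[m]}\frac{w^{(i)}_j}{W^{(i)}}\,y^{(i)}_j h^\star(x^{(i)}_j)\Big)^2=\Gamma_s\sum_{i\in[n]}W^{(i)},$$ where $w^{(i)}_j,W^{(i)},h^\star$ are the quantities of iteration $s$. Then $$\frac{1}{nm}\sum_{i\in[n]}\sum_{j\in[m]}\mathbf{1}\big[\mathrm{sign}(h^{(i)}(x^{(i)}_j))\neq y^{(i)}_j\big]\ \le\ \prod_{s\in[t]}\Big(1-\frac{\Gamma_s}{2}\Big).$$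
   Context: Algorithm $\textsc{Boost}(S^{(1)},\dots,S^{(n)},\mathcal{H},t)$: initialize real-valued functions $h^{(1)},\dots,h^{(n)}$ to the constant $0$. Repeat $t$ times: (1) for each $i\in[n],j\in[m]$ set $w^{(i)}_j=\exp(-y^{(i)}_j h^{(i)}(x^{(i)}_j))$ and $W^{(i)}=\sum_{j\in[m]}w^{(i)}_j$; (2) choose $h^\star\in\arg\max_{h\in\mathcal{H}}\sum_{i\in[n]}W^{(i)}\big(\sum_{j\in[m]}\frac{w^{(i)}_j}{W^{(i)}}y^{(i)}_jh(x^{(i)}_j)\big)^2$; (3) for each $i\in[n]$, update $h^{(i)}\leftarrow h^{(i)}+\alpha^{(i)}h^\star$ with $\alpha^{(i)}=\frac12\ln\Big(\frac{\sum_j w^{(i)}_j\mathbf{1}[y^{(i)}_j=h^\star(x^{(i)}_j)]}{\sum_j w^{(i)}_j\mathbf{1}[y^{(i)}_j\neq h^\star(x^{(i)}_j)]}\Big)$. Output $h^{(1)},\dots,h^{(n)}$ (used as classifiers via $\mathrm{sign}(h^{(i)})$). *)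

theory Defs
  imports Complex_Main
begin

text \<open>Samples: for i < n, j < m the point x i j (a list of length d with entries +-1)
  and label y i j (in {-1,1}). F i is the current real-valued function h^(i).\<close>

definition cube :: "nat \<Rightarrow> int list set" where
  "cube d = {v. length v = d \<and> set v \<subseteq> {-1, 1}}"

definition bw :: "(nat \<Rightarrow> nat \<Rightarrow> int list) \<Rightarrow> (nat \<Rightarrow> nat \<Rightarrow> int)
    \<Rightarrow> (nat \<Rightarrow> int list \<Rightarrow> real) \<Rightarrow> nat \<Rightarrow> nat \<Rightarrow> real" where
  "bw x y F i j = exp (- real_of_int (y i j) * F i (x i j))"

definition bW :: "(nat \<Rightarrow> nat \<Rightarrow> int list) \<Rightarrow> (nat \<Rightarrow> nat \<Rightarrow> int) \<Rightarrow> nat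
    \<Rightarrow> (nat \<Rightarrow> int list \<Rightarrow> real) \<Rightarrow> nat \<Rightarrow> real" where
  "bW x y m F i = (\<Sum>j<m. bw x y F i j)"

definition correct_mass :: "(nat \<Rightarrow> nat \<Rightarrow> int list) \<Rightarrow> (nat \<Rightarrow> nat \<Rightarrow> int) \<Rightarrow> nat
    \<Rightarrow> (nat \<Rightarrow> int list \<Rightarrow> real) \<Rightarrow> (int list \<Rightarrow> real) \<Rightarrow> nat \<Rightarrow> real" where
  "correct_mass x y m F h i =
     (\<Sum>j<m. if real_of_int (y i j) = h (x i j) then bw x y F i j else 0)"

definition wrong_mass :: "(nat \<Rightarrow> nat \<Rightarrow> int list) \<Rightarrow> (nat \<Rightarrow> nat \<Rightarrow> int) \<Rightarrow> nat
    \<Rightarrow> (nat \<Rightarrow> int list \<Rightarrow> real) \<Rightarrow> (int list \<Rightarrow> real) \<Rightarrow> nat \<Rightarrow> real" where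
  "wrong_mass x y m F h i =
     (\<Sum>j<m. if real_of_int (y i j) \<noteq> h (x i j) then bw x y F i j else 0)"

definition balpha :: "(nat \<Rightarrow> nat \<Rightarrow> int list) \<Rightarrow> (nat \<Rightarrow> nat \<Rightarrow> int) \<Rightarrow> nat
    \<Rightarrow> (nat \<Rightarrow> int list \<Rightarrow> real) \<Rightarrow> (int list \<Rightarrow> real) \<Rightarrow> nat \<Rightarrow> real" where
  "balpha x y m F h i = ln (correct_mass x y m F h i / wrong_mass x y m F h i) / 2"

text \<open>The objective maximised in step (2).\<close>
definition objective :: "(nat \<Rightarrow> nat \<Rightarrow> int list) \<Rightarrow> (nat \<Rightarrow> nat \<Rightarrow> int) \<Rightarrow> nat \<Rightarrow> nat
    \<Rightarrow> (nat \<Rightarrow> int list \<Rightarrow> real) \<Rightarrow> (int list \<Rightarrow> real) \<Rightarrow> real" where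
  "objective x y n m F h =
     (\<Sum>i<n. bW x y m F i *
        (\<Sum>j<m. bw x y F i j / bW x y m F i * real_of_int (y i j) * h (x i j))\<^sup>2)"

text \<open>boostF x y m hs s = the functions h^(1..n) after s rounds, when the hypothesis
  chosen in round r (r < s) is hs r.\<close>
fun boostF :: "(nat \<Rightarrow> nat \<Rightarrow> int list) \<Rightarrow> (nat \<Rightarrow> nat \<Rightarrow> int) \<Rightarrow> nat
    \<Rightarrow> (nat \<Rightarrow> int list \<Rightarrow> real) \<Rightarrow> nat \<Rightarrow> nat \<Rightarrow> int list \<Rightarrow> real" where
  "boostF x y m hs 0 = (\<lambda>i v. 0)"
| "boostF x y m hs (Suc s) =
     (let F = boostF x y m hs s
      in (\<lambda>i v. F i v + balpha x y m F (hs s) i * hs s v))"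

definition Gamma :: "(nat \<Rightarrow> nat \<Rightarrow> int list) \<Rightarrow> (nat \<Rightarrow> nat \<Rightarrow> int) \<Rightarrow> nat \<Rightarrow> nat
    \<Rightarrow> (nat \<Rightarrow> int list \<Rightarrow> real) \<Rightarrow> nat \<Rightarrow> real" where
  "Gamma x y n m hs s =
     objective x y n m (boostF x y m hs s) (hs s) / (\<Sum>i<n. bW x y m (boostF x y m hs s) i)"

end

theory Submission
  imports Defs
begin

lemma pm_cases: "(u::real) \<in> {-1,1} \<Longrightarrow> v \<in> {-1,1} \<Longrightarrow>
   (if u = v then b else 0) + (if u \<noteq> v then b else 0) = b \<and>
   (if u = v then b else 0) - (if u \<noteq> v then b else 0) = b * u * v \<and>
   b * exp (- a * (u * v)) = (if u = v then b * exp (-a) else 0) + (if u \<noteq> v then b * exp a else 0)"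
  by auto

lemma sqrt_bound:
  fixes c w :: real assumes c: "c > 0" and w: "w > 0"
  shows "c * exp (- (ln (c / w) / 2)) + w * exp (ln (c / w) / 2) \<le> (c + w) - (c - w)^2 / (c + w) / 2"
proof -
  have e1: "exp (ln (c / w) / 2) = sqrt (c / w)"
    using c w by (simp add: powr_half_sqrt[symmetric] powr_def)
  have e2: "exp (- (ln (c / w) / 2)) = sqrt (w / c)"
  proof -
    have "exp (- (ln (c / w) / 2)) = inverse (exp (ln (c / w) / 2))" by (simp add: exp_minus)
    also have "\<dots> = sqrt (w / c)" using e1 by (simp add: real_sqrt_inverse[symmetric])
    finally show ?thesis .
  qed
  have m1: "c * sqrt (w / c) = sqrt (c * w)"
  proof -
    have "c * sqrt (w / c) = sqrt (c^2) * sqrt (w / c)" using c by simp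
    also have "\<dots> = sqrt (c^2 * (w / c))" by (simp only: real_sqrt_mult)
    also have "c^2 * (w / c) = c * w" using c by (simp add: power2_eq_square)
    finally show ?thesis .
  qed
  have m2: "w * sqrt (c / w) = sqrt (c * w)"
  proof -
    have "w * sqrt (c / w) = sqrt (w^2) * sqrt (c / w)" using w by simp
    also have "\<dots> = sqrt (w^2 * (c / w))" by (simp only: real_sqrt_mult)
    also have "w^2 * (c / w) = c * w" using w by (simp add: power2_eq_square)
    finally show ?thesis .
  qed
  have L: "c * exp (- (ln (c / w) / 2)) + w * exp (ln (c / w) / 2) = sqrt (4 * c * w)"
  proof -
    have "sqrt (4 * c * w) = 2 * sqrt (c * w)"
      by (simp add: real_sqrt_mult mult.assoc)
    thus ?thesis using e1 e2 m1 m2 by simp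
  qed
  have S: "c + w > 0" using c w by simp
  have R: "(c + w) - (c - w)^2 / (c + w) / 2 = ((c + w)^2 - (c - w)^2 / 2) / (c + w)"
    using S by (simp add: field_simps power2_eq_square)
  have nn0: "0 \<le> (c + w)^2 - (c - w)^2 / 2"
  proof -
    have "(c - w)^2 \<le> (c + w)^2" using c w by (simp add: power2_eq_square algebra_simps)
    moreover have "0 \<le> (c - w)^2" by simp
    ultimately show ?thesis by linarith
  qed
  have nn: "0 \<le> ((c + w)^2 - (c - w)^2 / 2) / (c + w)"
    using nn0 S by simp
  have id: "((c + w)^2 - (c - w)^2 / 2)^2 - 4 * c * w * (c + w)^2 = ((c - w)^2)^2 / 4"
    by (simp add: power2_eq_square field_simps)
  have sq: "4 * c * w \<le> (((c + w)^2 - (c - w)^2 / 2) / (c + w))^2"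
  proof -
    have "4 * c * w * (c + w)^2 \<le> ((c + w)^2 - (c - w)^2 / 2)^2"
      using id by (smt (verit) zero_le_power2 divide_nonneg_pos)
    thus ?thesis using S by (simp add: power_divide pos_le_divide_eq)
  qed
  show ?thesis unfolding L R by (rule real_le_lsqrt[OF nn sq])
qed

lemma round_i:
  fixes F :: "nat \<Rightarrow> int list \<Rightarrow> real" and h :: "int list \<Rightarrow> real"
  assumes pm: "\<And>j. j < m \<Longrightarrow> real_of_int (y i j) \<in> {-1,1} \<and> h (x i j) \<in> {-1,1}"
    and c: "correct_mass x y m F h i > 0" and w: "wrong_mass x y m F h i > 0"
  shows "bW x y m (\<lambda>i' v. F i' v + balpha x y m F h i' * h v) i
           \<le> bW x y m F i - bW x y m F i * (\<Sum>j<m. bw x y F i j / bW x y m F i * real_of_int (y i j) * h (x i j))\<^sup>2 / 2"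
    and "bW x y m F i * (\<Sum>j<m. bw x y F i j / bW x y m F i * real_of_int (y i j) * h (x i j))\<^sup>2 \<le> bW x y m F i"
    and "bW x y m F i > 0"
proof -
  define C where "C = correct_mass x y m F h i"
  define Wr where "Wr = wrong_mass x y m F h i"
  define a where "a = balpha x y m F h i"
  have a: "a = ln (C / Wr) / 2" unfolding a_def C_def Wr_def balpha_def by simp
  have WB: "bW x y m F i = C + Wr"
    unfolding C_def Wr_def correct_mass_def wrong_mass_def bW_def sum.distrib[symmetric]
    using pm pm_cases by (intro sum.cong) auto
  have D: "(\<Sum>j<m. bw x y F i j * real_of_int (y i j) * h (x i j)) = C - Wr"
    unfolding C_def Wr_def correct_mass_def wrong_mass_def sum_subtractf[symmetric]
    using pm pm_cases by (intro sum.cong) auto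
  have bwstep: "\<And>j. bw x y (\<lambda>i' v. F i' v + balpha x y m F h i' * h v) i j
       = bw x y F i j * exp (- a * (real_of_int (y i j) * h (x i j)))"
    unfolding bw_def a_def by (simp add: exp_add[symmetric] algebra_simps)
  have N: "bW x y m (\<lambda>i' v. F i' v + balpha x y m F h i' * h v) i = C * exp (-a) + Wr * exp a"
    unfolding bW_def bwstep C_def Wr_def correct_mass_def wrong_mass_def
      sum_distrib_right sum.distrib[symmetric]
    using pm pm_cases by (intro sum.cong) auto
  have Cp: "C > 0" "Wr > 0" using c w C_def Wr_def by auto
  have S: "C + Wr > 0" using Cp by simp
  have obj: "bW x y m F i * (\<Sum>j<m. bw x y F i j / bW x y m F i * real_of_int (y i j) * h (x i j))\<^sup>2
       = (C - Wr)^2 / (C + Wr)"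
  proof -
    have "(\<Sum>j<m. bw x y F i j / bW x y m F i * real_of_int (y i j) * h (x i j))
        = (\<Sum>j<m. bw x y F i j * real_of_int (y i j) * h (x i j)) / bW x y m F i"
      by (simp add: sum_divide_distrib)
    thus ?thesis using D WB S by (simp add: power_divide power2_eq_square)
  qed
  show "bW x y m (\<lambda>i' v. F i' v + balpha x y m F h i' * h v) i
           \<le> bW x y m F i - bW x y m F i * (\<Sum>j<m. bw x y F i j / bW x y m F i * real_of_int (y i j) * h (x i j))\<^sup>2 / 2"
  proof -
    have X: "C * exp (-a) + Wr * exp a \<le> (C + Wr) - (C - Wr)^2 / (C + Wr) / 2"
      using sqrt_bound[OF Cp] by (simp only: a)
    show ?thesis by (simp only: N obj) (use X WB in simp)
  qed
  have "(C - Wr)^2 / (C + Wr) \<le> C + Wr"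
  proof -
    have "(C - Wr)^2 \<le> (C + Wr) * (C + Wr)" using Cp by (simp add: power2_eq_square algebra_simps)
    thus ?thesis using S by (simp add: pos_divide_le_eq)
  qed
  thus "bW x y m F i * (\<Sum>j<m. bw x y F i j / bW x y m F i * real_of_int (y i j) * h (x i j))\<^sup>2 \<le> bW x y m F i"
    by (simp only: obj) (use WB in simp)
  show "bW x y m F i > 0" using WB S by simp
qed

theorem mainTheorem3:
  fixes n m d t :: nat
    and x :: "nat \<Rightarrow> nat \<Rightarrow> int list" and y :: "nat \<Rightarrow> nat \<Rightarrow> int"
    and H :: "(int list \<Rightarrow> real) set"
    and hs :: "nat \<Rightarrow> int list \<Rightarrow> real"
  assumes x_cube: "\<And>i j. i < n \<Longrightarrow> j < m \<Longrightarrow> x i j \<in> cube d"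
    and y_pm: "\<And>i j. i < n \<Longrightarrow> j < m \<Longrightarrow> y i j \<in> {-1, 1}"
    and H_pm: "\<And>h v. h \<in> H \<Longrightarrow> v \<in> cube d \<Longrightarrow> h v \<in> {-1, 1}"
    and hs_in: "\<And>s. s < t \<Longrightarrow> hs s \<in> H"
    and hs_max: "\<And>s h. s < t \<Longrightarrow> h \<in> H \<Longrightarrow>
        objective x y n m (boostF x y m hs s) h \<le> objective x y n m (boostF x y m hs s) (hs s)"
    and alpha_def: "\<And>s i. s < t \<Longrightarrow> i < n \<Longrightarrow>
        correct_mass x y m (boostF x y m hs s) (hs s) i > 0 \<and>
        wrong_mass x y m (boostF x y m hs s) (hs s) i > 0"
  shows "(\<Sum>i<n. \<Sum>j<m. if sgn (boostF x y m hs t i (x i j)) \<noteq> real_of_int (y i j) then 1 else 0)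
           / (real n * real m)
         \<le> (\<Prod>s<t. 1 - Gamma x y n m hs s / 2)"
proof -
  define T where "T s = (\<Sum>i<n. bW x y m (boostF x y m hs s) i)" for s
  have step: "T (Suc s) \<le> T s * (1 - Gamma x y n m hs s / 2) \<and> 0 \<le> 1 - Gamma x y n m hs s / 2"
    if st: "s < t" for s
  proof -
    let ?F = "boostF x y m hs s"
    let ?g = "\<lambda>i. bW x y m ?F i * (\<Sum>j<m. bw x y ?F i j / bW x y m ?F i * real_of_int (y i j) * hs s (x i j))\<^sup>2"
    have pm: "\<And>i j. i < n \<Longrightarrow> j < m \<Longrightarrow> real_of_int (y i j) \<in> {-1,1} \<and> hs s (x i j) \<in> {-1,1}"
    proof -
      fix i j assume "i < n" "j < m"
      thus "real_of_int (y i j) \<in> {-1,1} \<and> hs s (x i j) \<in> {-1,1}"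
        using y_pm[of i j] H_pm[OF hs_in[OF st] x_cube] by auto
    qed
    have R: "\<And>i. i < n \<Longrightarrow> bW x y m (boostF x y m hs (Suc s)) i \<le> bW x y m ?F i - ?g i / 2
        \<and> ?g i \<le> bW x y m ?F i \<and> bW x y m ?F i > 0"
    proof -
      fix i assume i: "i < n"
      have pmi: "\<And>j. j < m \<Longrightarrow> real_of_int (y i j) \<in> {-1,1} \<and> hs s (x i j) \<in> {-1,1}"
        using pm i by blast
      show "?thesis i" using round_i[where x=x and y=y and m=m and i=i and h="hs s" and F="boostF x y m hs s", OF pmi] alpha_def[OF st i] by (simp add: Let_def)
    qed
    have obj: "objective x y n m ?F (hs s) = (\<Sum>i<n. ?g i)" unfolding objective_def by simp
    have T1: "T (Suc s) \<le> T s - objective x y n m ?F (hs s) / 2"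
      unfolding T_def obj sum_divide_distrib sum_subtractf[symmetric] using R by (intro sum_mono) auto
    have ob: "objective x y n m ?F (hs s) \<le> T s" unfolding obj T_def using R by (intro sum_mono) auto
    have G: "Gamma x y n m hs s = objective x y n m ?F (hs s) / T s" unfolding Gamma_def T_def by simp
    show ?thesis
    proof (cases "n = 0")
      case True thus ?thesis using T1 G by (simp add: T_def)
    next
      case False
      hence Tp: "T s > 0" unfolding T_def using R by (intro sum_pos) auto
      have "T s * (1 - Gamma x y n m hs s / 2) = T s - objective x y n m ?F (hs s) / 2"
        using G Tp by (simp add: field_simps)
      moreover have "Gamma x y n m hs s \<le> 1" using G Tp ob by simp
      ultimately show ?thesis using T1 by simp
    qed
  qed
  have T0: "T 0 = real n * real m" unfolding T_def bW_def bw_def by simp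
  have Tb: "s \<le> t \<Longrightarrow> T s \<le> real n * real m * (\<Prod>r<s. 1 - Gamma x y n m hs r / 2)" for s
  proof (induction s)
    case 0 thus ?case using T0 by simp
  next
    case (Suc s)
    hence st: "s < t" by simp
    have "T (Suc s) \<le> T s * (1 - Gamma x y n m hs s / 2)" using step[OF st] by simp
    also have "\<dots> \<le> real n * real m * (\<Prod>r<s. 1 - Gamma x y n m hs r / 2) * (1 - Gamma x y n m hs s / 2)"
      using Suc step[OF st] by (intro mult_right_mono) auto
    finally show ?case by (simp add: mult.assoc)
  qed
  have err: "(\<Sum>i<n. \<Sum>j<m. if sgn (boostF x y m hs t i (x i j)) \<noteq> real_of_int (y i j) then 1 else 0) \<le> T t"
    unfolding T_def bW_def
  proof (intro sum_mono)
    fix i j assume "i \<in> {..<n}" "j \<in> {..<m}"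
    hence yy: "y i j \<in> {-1,1}" using y_pm by auto
    show "(if sgn (boostF x y m hs t i (x i j)) \<noteq> real_of_int (y i j) then 1 else 0) \<le> bw x y (boostF x y m hs t) i j"
      unfolding bw_def using yy
      by (cases "boostF x y m hs t i (x i j)" rule: linorder_cases) (auto simp: sgn_if)
  qed
  have pn: "0 \<le> (\<Prod>r<t. 1 - Gamma x y n m hs r / 2)" using step by (intro prod_nonneg) auto
  show ?thesis
  proof (cases "real n * real m = 0")
    case True thus ?thesis using pn by auto
  next
    case False
    hence "real n * real m > 0" by simp
    thus ?thesis using err Tb[of t] by (simp add: pos_divide_le_eq mult.commute)
  qed
qed

end
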